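(* Let $S\subseteq\mathbb{N}^{\mathbb{N}}$. Consider the following game: Alice fixes a sequence $f\in\mathbb{N}^{\mathbb{N}}$ (she has no information). At the start, Bob chooses a countable set $\Sigma$ of symbols of $\mathscr{L}_{\max}$ and a listing $\phi_0,\phi_1,\dots$ of all quantifier-free sentences of $\mathscr{L}_{\max}\cap\Sigma$; then on his $n$th move Bob is told the value $f(\phi_n)$ (and nothing else about $f$), and plays a natural number $b_n$ depending only on $f(\phi_0),\dots,f(\phi_n)$. Bob wins if either $f\in S$ and $b_n=1$ for all sufficiently large $n$, or $f\notin S$ and $b_n=0$ for all sufficiently large $n$. Then Bob has a winning strategy if and only if $S$ is guessable, i.e. there is $G:\mathbb{N}^{<\mathbb{N}}\to\mathbb{N}$ such that for every $f\in\mathbb{N}^{\mathbb{N}}$, $\lim_{n\to\infty}G(f(0),\dots,f(n))$ equals $1$ if $f\in S$ and $0$ if $f\notin S$.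
   Context: The language $\mathscr{L}_{\max}$ is the first-order language (with equality) having: a constant symbol $\overline{n}$ for each $n\in\mathbb{N}$; an $n$-ary function symbol $\tilde w$ for each $w:\mathbb{N}^n\to\mathbb{N}$; an $n$-ary predicate symbol $\tilde p$ for each $p\subseteq\mathbb{N}^n$; a special unary function symbol $\mathbf{f}$; and, for every $n$ and every $G:\mathbb{N}^n\times\mathbb{N}^{<\mathbb{N}}\to\mathbb{N}$, an $(n+1)$-ary function symbol $G\circ\mathbf{f}$. For $f\in\mathbb{N}^{\mathbb{N}}$, $\mathscr{M}_f$ is the structure with universe $\mathbb{N}$ interpreting $\overline n$ as $n$, $\tilde w$ as $w$, $\tilde p$ as $p$, $\mathbf f$ as $f$, and $G\circ\mathbf f$ as $(m_1,\dots,m_n,m)\mapsto G(m_1,\dots,m_n,f(0),\dots,f(m))$. For a sentence $\phi$, $f(\phi)=1$ if $\mathscr{M}_f\models\phi$ and $f(\phi)=0$ otherwise. "Quantifier-free" means containing no quantifiers at all (not even bounded ones). For a set $\Sigma$ of symbols of $\mathscr{L}_{\max}$, a sentence "of $\mathscr{L}_{\max}\cap\Sigma$" is an $\mathscr{L}_{\max}$-sentence all of whose non-logical symbols lie in $\Sigma$. *)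

theory Defs
  imports Complex_Main "HOL-Library.Countable_Set"
begin

text \<open>An n-ary function is represented by a function on lists,
  required (by wf_sym) to be 0 on lists of length different from n, so that symbols
  correspond exactly to the paper's symbols.\<close>

datatype sym =
    SConst nat
  | SFun nat "nat list \<Rightarrow> nat"
  | SPred nat "nat list set"
  | SF
  | SG nat "nat list \<Rightarrow> nat list \<Rightarrow> nat"

definition wf_sym :: "sym \<Rightarrow> bool" where
  "wf_sym s = (case s of
      SConst _ \<Rightarrow> True
    | SFun n w \<Rightarrow> (\<forall>xs. length xs \<noteq> n \<longrightarrow> w xs = 0)
    | SPred n p \<Rightarrow> (\<forall>xs\<in>p. length xs = n)
    | SF \<Rightarrow> True
    | SG n G \<Rightarrow> (\<forall>xs ys. (length xs \<noteq> n \<or> ys = []) \<longrightarrow> G xs ys = 0))"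

text \<open>Closed terms (no variables: quantifier-free sentences contain none).\<close>
datatype trm =
    Const nat
  | App nat "nat list \<Rightarrow> nat" "trm list"
  | FApp trm
  | GApp nat "nat list \<Rightarrow> nat list \<Rightarrow> nat" "trm list" trm

datatype fm =
    Eq trm trm
  | Rel nat "nat list set" "trm list"
  | Neg fm
  | Conj fm fm
  | Disj fm fm
  | Imp fm fm

fun syms_trm :: "trm \<Rightarrow> sym set" where
  "syms_trm (Const n) = {SConst n}"
| "syms_trm (App n w ts) = insert (SFun n w) (\<Union>t\<in>set ts. syms_trm t)"
| "syms_trm (FApp t) = insert SF (syms_trm t)"
| "syms_trm (GApp n G ts t) = insert (SG n G) (syms_trm t \<union> (\<Union>u\<in>set ts. syms_trm u))"

fun wf_trm :: "trm \<Rightarrow> bool" where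
  "wf_trm (Const n) = True"
| "wf_trm (App n w ts) = (length ts = n \<and> (\<forall>t\<in>set ts. wf_trm t))"
| "wf_trm (FApp t) = wf_trm t"
| "wf_trm (GApp n G ts t) = (length ts = n \<and> wf_trm t \<and> (\<forall>u\<in>set ts. wf_trm u))"

fun syms_fm :: "fm \<Rightarrow> sym set" where
  "syms_fm (Eq s t) = syms_trm s \<union> syms_trm t"
| "syms_fm (Rel n p ts) = insert (SPred n p) (\<Union>t\<in>set ts. syms_trm t)"
| "syms_fm (Neg a) = syms_fm a"
| "syms_fm (Conj a b) = syms_fm a \<union> syms_fm b"
| "syms_fm (Disj a b) = syms_fm a \<union> syms_fm b"
| "syms_fm (Imp a b) = syms_fm a \<union> syms_fm b"

fun wf_fm :: "fm \<Rightarrow> bool" where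
  "wf_fm (Eq s t) = (wf_trm s \<and> wf_trm t)"
| "wf_fm (Rel n p ts) = (length ts = n \<and> (\<forall>t\<in>set ts. wf_trm t))"
| "wf_fm (Neg a) = wf_fm a"
| "wf_fm (Conj a b) = (wf_fm a \<and> wf_fm b)"
| "wf_fm (Disj a b) = (wf_fm a \<and> wf_fm b)"
| "wf_fm (Imp a b) = (wf_fm a \<and> wf_fm b)"

definition qf_sentences :: "sym set \<Rightarrow> fm set" where
  "qf_sentences Sig = {\<phi>. wf_fm \<phi> \<and> (\<forall>s\<in>syms_fm \<phi>. wf_sym s) \<and> syms_fm \<phi> \<subseteq> Sig}"

fun eval_trm :: "(nat \<Rightarrow> nat) \<Rightarrow> trm \<Rightarrow> nat" where
  "eval_trm f (Const n) = n"
| "eval_trm f (App n w ts) = w (map (eval_trm f) ts)"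
| "eval_trm f (FApp t) = f (eval_trm f t)"
| "eval_trm f (GApp n G ts t) = G (map (eval_trm f) ts) (map f [0..<Suc (eval_trm f t)])"

fun holds :: "(nat \<Rightarrow> nat) \<Rightarrow> fm \<Rightarrow> bool" where
  "holds f (Eq s t) = (eval_trm f s = eval_trm f t)"
| "holds f (Rel n p ts) = (map (eval_trm f) ts \<in> p)"
| "holds f (Neg a) = (\<not> holds f a)"
| "holds f (Conj a b) = (holds f a \<and> holds f b)"
| "holds f (Disj a b) = (holds f a \<or> holds f b)"
| "holds f (Imp a b) = (holds f a \<longrightarrow> holds f b)"

text \<open>f(phi) \<in> {0,1}.\<close>
definition fval :: "(nat \<Rightarrow> nat) \<Rightarrow> fm \<Rightarrow> nat" where
  "fval f \<phi> = (if holds f \<phi> then 1 else 0)"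

text \<open>Bob's winning strategy: a countable set Sig of symbols, a listing phi of all
  quantifier-free sentences of L_max \<inter> Sig, and a move function B where
  b_n = B [f(phi_0),...,f(phi_n)].\<close>
definition bob_wins :: "(nat \<Rightarrow> nat) set \<Rightarrow> sym set \<Rightarrow> (nat \<Rightarrow> fm) \<Rightarrow> (nat list \<Rightarrow> nat) \<Rightarrow> bool" where
  "bob_wins S Sig phi B =
     (\<forall>f. (f \<in> S \<longrightarrow> (\<exists>N. \<forall>n\<ge>N. B (map (\<lambda>k. fval f (phi k)) [0..<Suc n]) = 1)) \<and>
          (f \<notin> S \<longrightarrow> (\<exists>N. \<forall>n\<ge>N. B (map (\<lambda>k. fval f (phi k)) [0..<Suc n]) = 0)))"

definition bob_has_winning_strategy :: "(nat \<Rightarrow> nat) set \<Rightarrow> bool" where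
  "bob_has_winning_strategy S =
     (\<exists>Sig phi B. countable Sig \<and> Sig \<subseteq> Collect wf_sym \<and>
        range phi = qf_sentences Sig \<and> bob_wins S Sig phi B)"

definition guessable :: "(nat \<Rightarrow> nat) set \<Rightarrow> bool" where
  "guessable S =
     (\<exists>G :: nat list \<Rightarrow> nat. \<forall>f.
        (\<lambda>n. G (map f [0..<Suc n])) \<longlonglongrightarrow> (if f \<in> S then 1 else 0))"

end

theory Submission imports Defs begin

datatype ctrm = CConst nat | CApp nat "ctrm list" | CFApp ctrm | CGApp nat "ctrm list" ctrm
datatype cfm = CEq ctrm ctrm | CRel nat "ctrm list" | CNeg cfm | CConj cfm cfm | CDisj cfm cfm | CImp cfm cfm

instance ctrm :: countable by countable_datatype
instance cfm :: countable by countable_datatype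

fun dec_trm :: "sym set \<Rightarrow> ctrm \<Rightarrow> trm" where
  "dec_trm Sig (CConst n) = Const n"
| "dec_trm Sig (CApp i cs) = (case from_nat_into Sig i of SFun n w \<Rightarrow> App n w (map (dec_trm Sig) cs) | _ \<Rightarrow> Const 0)"
| "dec_trm Sig (CFApp c) = FApp (dec_trm Sig c)"
| "dec_trm Sig (CGApp i cs c) = (case from_nat_into Sig i of SG n G \<Rightarrow> GApp n G (map (dec_trm Sig) cs) (dec_trm Sig c) | _ \<Rightarrow> Const 0)"

fun dec_fm :: "sym set \<Rightarrow> cfm \<Rightarrow> fm" where
  "dec_fm Sig (CEq a b) = Eq (dec_trm Sig a) (dec_trm Sig b)"
| "dec_fm Sig (CRel i cs) = (case from_nat_into Sig i of SPred n p \<Rightarrow> Rel n p (map (dec_trm Sig) cs) | _ \<Rightarrow> Eq (Const 0) (Const 0))"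
| "dec_fm Sig (CNeg a) = Neg (dec_fm Sig a)"
| "dec_fm Sig (CConj a b) = Conj (dec_fm Sig a) (dec_fm Sig b)"
| "dec_fm Sig (CDisj a b) = Disj (dec_fm Sig a) (dec_fm Sig b)"
| "dec_fm Sig (CImp a b) = Imp (dec_fm Sig a) (dec_fm Sig b)"

lemma dec_trm_surj: "countable Sig \<Longrightarrow> syms_trm t \<subseteq> Sig \<Longrightarrow> t \<in> range (dec_trm Sig)"
proof (induction t)
  case (Const n) then show ?case by (metis dec_trm.simps(1) rangeI)
next
  case (App n w ts)
  then have "\<forall>t\<in>set ts. \<exists>c. t = dec_trm Sig c" by auto
  then obtain cs where cs: "ts = map (dec_trm Sig) cs" using ex_map_conv by metis
  have "SFun n w \<in> Sig" using App by auto
  then have "dec_trm Sig (CApp (to_nat_on Sig (SFun n w)) cs) = App n w ts" using App cs by simp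
  then show ?case by (metis rangeI)
next
  case (FApp t) then show ?case by (auto, metis dec_trm.simps(3) rangeI)
next
  case (GApp n G ts t)
  have "\<forall>t\<in>set ts. t \<in> range (dec_trm Sig)" using GApp.IH(1) GApp.prems by force
  then have "\<forall>t\<in>set ts. \<exists>c. t = dec_trm Sig c" by blast
  then obtain cs where cs: "ts = map (dec_trm Sig) cs" using ex_map_conv by metis
  from GApp obtain c where c: "t = dec_trm Sig c" by auto
  have "SG n G \<in> Sig" using GApp by auto
  then have "dec_trm Sig (CGApp (to_nat_on Sig (SG n G)) cs c) = GApp n G ts t" using GApp cs c by simp
  then show ?case by (metis rangeI)
qed

lemma dec_fm_surj: "countable Sig \<Longrightarrow> syms_fm t \<subseteq> Sig \<Longrightarrow> t \<in> range (dec_fm Sig)"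
proof (induction t)
  case (Eq a b)
  then obtain c d where "a = dec_trm Sig c" "b = dec_trm Sig d" using dec_trm_surj by (metis Un_subset_iff imageE syms_fm.simps(1))
  then show ?case by (metis dec_fm.simps(1) rangeI)
next
  case (Rel n p ts)
  have "\<forall>t\<in>set ts. t \<in> range (dec_trm Sig)" using Rel dec_trm_surj by force
  then have "\<forall>t\<in>set ts. \<exists>c. t = dec_trm Sig c" by blast
  then obtain cs where cs: "ts = map (dec_trm Sig) cs" using ex_map_conv by metis
  have "SPred n p \<in> Sig" using Rel by auto
  then have "dec_fm Sig (CRel (to_nat_on Sig (SPred n p)) cs) = Rel n p ts" using Rel cs by simp
  then show ?case by (metis rangeI)
next
  case (Neg a) then show ?case by (auto, metis dec_fm.simps(3) rangeI)
next
  case (Conj a b) then show ?case by (auto, metis dec_fm.simps(4) rangeI)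
next
  case (Disj a b) then show ?case by (auto, metis dec_fm.simps(5) rangeI)
next
  case (Imp a b) then show ?case by (auto, metis dec_fm.simps(6) rangeI)
qed

lemma countable_qf: "countable Sig \<Longrightarrow> countable (qf_sentences Sig)"
proof -
  assume "countable Sig"
  then have "qf_sentences Sig \<subseteq> range (dec_fm Sig)" using dec_fm_surj unfolding qf_sentences_def by blast
  then show ?thesis by (metis countable_image countable_subset uncountable_def countableI_type)
qed

definition agree :: "nat \<Rightarrow> (nat \<Rightarrow> nat) \<Rightarrow> (nat \<Rightarrow> nat) \<Rightarrow> bool" where
  "agree N g f = (\<forall>i<N. g i = f i)"

lemma agree_mono: "agree N' g f \<Longrightarrow> N \<le> N' \<Longrightarrow> agree N g f"
  unfolding agree_def by auto

lemma list_bound: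
  assumes "\<forall>t\<in>set ts. \<exists>N. \<forall>g. agree N g f \<longrightarrow> P g t"
  shows "\<exists>N. \<forall>g. agree N g f \<longrightarrow> (\<forall>t\<in>set ts. P g t)"
  using assms
proof (induction ts)
  case Nil then show ?case by auto
next
  case (Cons a ts)
  then obtain N1 where 1: "\<forall>g. agree N1 g f \<longrightarrow> P g a" by auto
  from Cons obtain N2 where 2: "\<forall>g. agree N2 g f \<longrightarrow> (\<forall>t\<in>set ts. P g t)" by auto
  show ?case
  proof (rule exI[of _ "max N1 N2"], intro allI impI)
    fix g assume "agree (max N1 N2) g f"
    then have "agree N1 g f" "agree N2 g f" using agree_mono by (meson max.cobounded1 max.cobounded2)+
    then show "\<forall>t\<in>set (a # ts). P g t" using 1 2 by auto
  qed
qed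

lemma cont_trm: "\<exists>N. \<forall>g. agree N g f \<longrightarrow> eval_trm g t = eval_trm f t"
proof (induction t)
  case (Const n) then show ?case by auto
next
  case (App n w ts)
  then obtain N where "\<forall>g. agree N g f \<longrightarrow> (\<forall>t\<in>set ts. eval_trm g t = eval_trm f t)"
    using list_bound[of ts f "\<lambda>g t. eval_trm g t = eval_trm f t"] by auto
  then show ?case by (metis eval_trm.simps(2) map_eq_conv)
next
  case (FApp t)
  then obtain N where N: "\<forall>g. agree N g f \<longrightarrow> eval_trm g t = eval_trm f t" by auto
  show ?case
  proof (rule exI[of _ "max N (Suc (eval_trm f t))"], intro allI impI)
    fix g assume a: "agree (max N (Suc (eval_trm f t))) g f"
    then have "eval_trm g t = eval_trm f t" using N agree_mono by (meson max.cobounded1)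
    moreover have "g (eval_trm f t) = f (eval_trm f t)" using a unfolding agree_def by auto
    ultimately show "eval_trm g (FApp t) = eval_trm f (FApp t)" by simp
  qed
next
  case (GApp n G ts t)
  then obtain N1 where N1: "\<forall>g. agree N1 g f \<longrightarrow> (\<forall>t\<in>set ts. eval_trm g t = eval_trm f t)"
    using list_bound[of ts f "\<lambda>g t. eval_trm g t = eval_trm f t"] by auto
  from GApp obtain N where N: "\<forall>g. agree N g f \<longrightarrow> eval_trm g t = eval_trm f t" by auto
  show ?case
  proof (rule exI[of _ "max N1 (max N (Suc (eval_trm f t)))"], intro allI impI)
    fix g assume a: "agree (max N1 (max N (Suc (eval_trm f t)))) g f"
    then have e: "eval_trm g t = eval_trm f t" using N agree_mono by (meson max.cobounded1 max.cobounded2 order_trans)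
    have m: "map (eval_trm g) ts = map (eval_trm f) ts" using a N1 agree_mono by (metis map_eq_conv max.cobounded1)
    have h: "map g [0..<Suc (eval_trm f t)] = map f [0..<Suc (eval_trm f t)]"
      using a unfolding agree_def by (intro map_cong) auto
    show "eval_trm g (GApp n G ts t) = eval_trm f (GApp n G ts t)" by (simp only: eval_trm.simps e m h)
  qed
qed

lemma cont_fm: "\<exists>N. \<forall>g. agree N g f \<longrightarrow> holds g \<phi> = holds f \<phi>"
proof (induction \<phi>)
  case (Eq s t)
  obtain N1 where 1: "\<forall>g. agree N1 g f \<longrightarrow> eval_trm g s = eval_trm f s" using cont_trm by blast
  obtain N2 where 2: "\<forall>g. agree N2 g f \<longrightarrow> eval_trm g t = eval_trm f t" using cont_trm by blast
  show ?case by (rule exI[of _ "max N1 N2"]) (metis 1 2 agree_mono holds.simps(1) max.cobounded1 max.cobounded2)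
next
  case (Rel n p ts)
  obtain N where "\<forall>g. agree N g f \<longrightarrow> (\<forall>t\<in>set ts. eval_trm g t = eval_trm f t)"
    using list_bound[of ts f "\<lambda>g t. eval_trm g t = eval_trm f t"] cont_trm by blast
  then show ?case by (metis holds.simps(2) map_eq_conv)
next
  case (Neg a) then show ?case by auto
next
  case (Conj a b)
  then obtain N1 N2 where 1: "\<forall>g. agree N1 g f \<longrightarrow> holds g a = holds f a" and 2: "\<forall>g. agree N2 g f \<longrightarrow> holds g b = holds f b" by blast
  show ?case by (rule exI[of _ "max N1 N2"]) (metis 1 2 agree_mono holds.simps(4) max.cobounded1 max.cobounded2)
next
  case (Disj a b)
  then obtain N1 N2 where 1: "\<forall>g. agree N1 g f \<longrightarrow> holds g a = holds f a" and 2: "\<forall>g. agree N2 g f \<longrightarrow> holds g b = holds f b" by blast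
  show ?case by (rule exI[of _ "max N1 N2"]) (metis 1 2 agree_mono holds.simps(5) max.cobounded1 max.cobounded2)
next
  case (Imp a b)
  then obtain N1 N2 where 1: "\<forall>g. agree N1 g f \<longrightarrow> holds g a = holds f a" and 2: "\<forall>g. agree N2 g f \<longrightarrow> holds g b = holds f b" by blast
  show ?case by (rule exI[of _ "max N1 N2"]) (metis 1 2 agree_mono holds.simps(6) max.cobounded1 max.cobounded2)
qed

lemma fin_eventually: "\<forall>k\<le>(J::nat). \<exists>N::nat. \<forall>n\<ge>N. P k n \<Longrightarrow> \<exists>N. \<forall>n\<ge>N. \<forall>k\<le>J. P k n"
proof (induction J)
  case 0 then show ?case by auto
next
  case (Suc J)
  then obtain N1 where 1: "\<forall>n\<ge>N1. \<forall>k\<le>J. P k n" by auto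
  from Suc.prems obtain N2 where 2: "\<forall>n\<ge>N2. P (Suc J) n" by auto
  show ?case
    by (rule exI[of _ "max N1 N2"]) (metis 1 2 le_Suc_eq max.boundedE)
qed

definition ext :: "nat list \<Rightarrow> nat \<Rightarrow> nat" where
  "ext xs = (\<lambda>i. if i < length xs then xs ! i else 0)"

definition det :: "nat list \<Rightarrow> fm \<Rightarrow> bool" where
  "det xs \<phi> = (\<forall>g. agree (length xs) g (ext xs) \<longrightarrow> holds g \<phi> = holds (ext xs) \<phi>)"

lemma ext_agree: "agree (Suc n) (ext (map f [0..<Suc n])) f"
  unfolding agree_def ext_def by (simp del: upt_Suc)

lemma agree_sym: "agree N g f \<Longrightarrow> agree N f g"
  unfolding agree_def by auto

lemma agree_trans: "agree N g f \<Longrightarrow> agree N f h \<Longrightarrow> agree N g h"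
  unfolding agree_def by auto

lemma det_eventually: "\<exists>N. \<forall>n\<ge>N. det (map f [0..<Suc n]) \<phi>"
proof -
  obtain N where N: "\<forall>g. agree N g f \<longrightarrow> holds g \<phi> = holds f \<phi>" using cont_fm by blast
  show ?thesis
  proof (rule exI[of _ N], intro allI impI)
    fix n assume n: "N \<le> n"
    show "det (map f [0..<Suc n]) \<phi>" unfolding det_def
    proof (intro allI impI)
      fix g assume a: "agree (length (map f [0..<Suc n])) g (ext (map f [0..<Suc n]))"
      have e: "agree (Suc n) (ext (map f [0..<Suc n])) f" by (rule ext_agree)
      have "agree (Suc n) g f" using a e agree_trans by (simp del: upt_Suc)
      then have "holds g \<phi> = holds f \<phi>" using N agree_mono n by (meson le_SucI)
      moreover have "holds (ext (map f [0..<Suc n])) \<phi> = holds f \<phi>" using N agree_mono n e by (meson le_SucI)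
      ultimately show "holds g \<phi> = holds (ext (map f [0..<Suc n])) \<phi>" by simp
    qed
  qed
qed

lemma det_val: "det (map f [0..<Suc n]) \<phi> \<Longrightarrow> fval (ext (map f [0..<Suc n])) \<phi> = fval f \<phi>"
  unfolding det_def fval_def using ext_agree agree_sym by (metis length_map length_upt minus_nat.diff_0)

lemma dir1:
  assumes "bob_has_winning_strategy S" shows "guessable S"
proof -
  from assms obtain Sig phi B where W: "bob_wins S Sig phi B"
    unfolding bob_has_winning_strategy_def by blast
  define D where "D xs = {m. m \<le> length xs \<and> (\<forall>k\<le>m. det xs (phi k))}" for xs
  define G where "G xs = B (map (\<lambda>k. fval (ext xs) (phi k)) [0..<Suc (Max (D xs))])" for xs
  have "(\<lambda>n. G (map f [0..<Suc n])) \<longlonglongrightarrow> (if f \<in> S then 1 else 0)" for f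
  proof -
    define c :: nat where "c = (if f \<in> S then 1 else 0)"
    obtain J where J: "\<forall>j\<ge>J. B (map (\<lambda>k. fval f (phi k)) [0..<Suc j]) = c"
    proof -
      have w: "(f \<in> S \<longrightarrow> (\<exists>N. \<forall>n\<ge>N. B (map (\<lambda>k. fval f (phi k)) [0..<Suc n]) = 1)) \<and>
          (f \<notin> S \<longrightarrow> (\<exists>N. \<forall>n\<ge>N. B (map (\<lambda>k. fval f (phi k)) [0..<Suc n]) = 0))"
        using W unfolding bob_wins_def by blast
      show ?thesis using that w unfolding c_def by (cases "f \<in> S") (simp_all del: upt_Suc, blast+)
    qed
    obtain N where N: "\<forall>n\<ge>N. \<forall>k\<le>J. det (map f [0..<Suc n]) (phi k)"
      using fin_eventually[of J "\<lambda>k n. det (map f [0..<Suc n]) (phi k)"] det_eventually by blast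
    have "G (map f [0..<Suc n]) = c" if n: "n \<ge> max N J" for n
    proof -
      let ?xs = "map f [0..<Suc n]"
      have fin: "finite (D ?xs)" unfolding D_def by (rule finite_subset[of _ "{..length ?xs}"]) auto
      have JD: "J \<in> D ?xs" unfolding D_def using N n by (simp del: upt_Suc)
      let ?m = "Max (D ?xs)"
      have mJ: "J \<le> ?m" using fin JD by simp
      have "?m \<in> D ?xs" using fin JD Max_in by blast
      then have dm: "\<forall>k\<le>?m. det ?xs (phi k)" unfolding D_def by blast
      have eq: "map (\<lambda>k. fval (ext ?xs) (phi k)) [0..<Suc ?m] = map (\<lambda>k. fval f (phi k)) [0..<Suc ?m]"
        using dm det_val by (intro map_cong) (auto simp del: upt_Suc)
      have "G ?xs = B (map (\<lambda>k. fval f (phi k)) [0..<Suc ?m])" unfolding G_def eq ..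
      then show ?thesis using J mJ by simp
    qed
    then show ?thesis unfolding c_def[symmetric] by (intro tendsto_eventually) (auto simp: eventually_sequentially simp del: upt_Suc intro!: exI[of _ "max N J"])
  qed
  then show ?thesis unfolding guessable_def by blast
qed

lemma dir2:
  assumes "guessable S" shows "bob_has_winning_strategy S"
proof -
  from assms obtain G :: "nat list \<Rightarrow> nat" where G: "\<And>f. (\<lambda>n. G (map f [0..<Suc n])) \<longlonglongrightarrow> (if f \<in> S then 1 else 0)"
    unfolding guessable_def by blast
  define G1 where "G1 xs ys = (if xs = [] \<and> ys \<noteq> [] then G ys else 0)" for xs ys :: "nat list"
  define Sig where "Sig = insert (SG 0 G1) (range SConst)"
  define psi where "psi n = Eq (GApp 0 G1 [] (Const n)) (Const 1)" for n
  define Q where "Q = qf_sentences Sig"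
  have cSig: "countable Sig" unfolding Sig_def by simp
  have wSig: "Sig \<subseteq> Collect wf_sym" unfolding Sig_def wf_sym_def G1_def by auto
  have psiQ: "psi n \<in> Q" for n
    using wSig unfolding Q_def qf_sentences_def psi_def Sig_def by auto
  then have Qne: "Q \<noteq> {}" by blast
  have cQ: "countable Q" unfolding Q_def using cSig countable_qf by blast
  define phi where "phi k = (if even k then psi (k div 2) else from_nat_into Q (k div 2))" for k
  have rng: "range phi = Q"
  proof
    show "range phi \<subseteq> Q" using psiQ from_nat_into[OF Qne] unfolding phi_def by auto
    show "Q \<subseteq> range phi"
    proof
      fix q assume "q \<in> Q"
      then have "from_nat_into Q (to_nat_on Q q) = q" using cQ by simp
      moreover have "phi (2 * to_nat_on Q q + 1) = from_nat_into Q (to_nat_on Q q)" unfolding phi_def by simp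
      ultimately show "q \<in> range phi" by (metis rangeI)
    qed
  qed
  define B where "B l = l ! (2 * ((length l - 1) div 2))" for l :: "nat list"
  have bv: "B (map (\<lambda>k. fval f (phi k)) [0..<Suc n]) = (if G (map f [0..<Suc (n div 2)]) = 1 then 1 else 0)" for f n
  proof -
    have i: "2 * (n div 2) < Suc n" by linarith
    have "B (map (\<lambda>k. fval f (phi k)) [0..<Suc n]) = fval f (phi (2 * (n div 2)))"
      unfolding B_def using i by (simp del: upt_Suc)
    also have "\<dots> = fval f (psi (n div 2))" unfolding phi_def by simp
    also have "\<dots> = (if G (map f [0..<Suc (n div 2)]) = 1 then 1 else 0)"
      unfolding fval_def psi_def G1_def by (simp del: upt_Suc)
    finally show ?thesis .
  qed
  have "bob_wins S Sig phi B" unfolding bob_wins_def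
  proof (intro allI conjI impI)
    fix f
    define c :: nat where "c = (if f \<in> S then 1 else 0)"
    from G[of f] obtain N where N: "\<forall>n\<ge>N. G (map f [0..<Suc n]) = c"
      unfolding c_def[symmetric] tendsto_discrete eventually_sequentially by blast
    have ev: "\<forall>n\<ge>2*N. B (map (\<lambda>k. fval f (phi k)) [0..<Suc n]) = c"
    proof (intro allI impI)
      fix n assume "2*N \<le> n" then have "N \<le> n div 2" by linarith
      then show "B (map (\<lambda>k. fval f (phi k)) [0..<Suc n]) = c" using bv N unfolding c_def by (auto simp del: upt_Suc)
    qed
    { assume "f \<in> S" then show "\<exists>N. \<forall>n\<ge>N. B (map (\<lambda>k. fval f (phi k)) [0..<Suc n]) = 1" using ev unfolding c_def by auto }
    { assume "f \<notin> S" then show "\<exists>N. \<forall>n\<ge>N. B (map (\<lambda>k. fval f (phi k)) [0..<Suc n]) = 0" using ev unfolding c_def by auto }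
  qed
  then show ?thesis unfolding bob_has_winning_strategy_def using cSig wSig rng Q_def by blast
qed

theorem mainTheorem6:
  fixes S :: "(nat \<Rightarrow> nat) set"
  shows "bob_has_winning_strategy S \<longleftrightarrow> guessable S"
  using dir1 dir2 by blast

end
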